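(* Let $X$ be a Tychonoff space and let $G(X)$ denote either $F(X)$ or $A(X)$. Then $G(X)$ has countable fan-tightness if and only if $X$ is discrete. *)

theory Defs
  imports "HOL-Analysis.Analysis" "HOL-Algebra.Free_Abelian_Groups"
begin

definition group_topology :: "('g, 'b) monoid_scheme \<Rightarrow> 'g topology \<Rightarrow> bool" where
  "group_topology G T \<longleftrightarrow>
     topspace T = carrier G \<and>
     continuous_map (prod_topology T T) T (\<lambda>(x, y). x \<otimes>\<^bsub>G\<^esub> y) \<and>
     continuous_map T T (\<lambda>x. inv\<^bsub>G\<^esub> x)"

text \<open>Markov topology: the finest group topology on G for which the map \<open>\<iota>\<close> from X
is continuous (the supremum of all such group topologies).\<close>
definition markov_topology ::
    "('g, 'b) monoid_scheme \<Rightarrow> ('a \<Rightarrow> 'g) \<Rightarrow> 'a topology \<Rightarrow> 'g topology" where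
  "markov_topology G \<iota> X =
     topology_generated_by
       (\<Union>{{U. openin T U} | T. group_topology G T \<and> continuous_map X T \<iota>})"

text \<open>A letter (a, True) stands for a, (a, False) for a inverse.\<close>
fun fg_reduce :: "('a \<times> bool) list \<Rightarrow> ('a \<times> bool) list" where
  "fg_reduce [] = []"
| "fg_reduce (x # xs) =
     (case fg_reduce xs of
        [] \<Rightarrow> [x]
      | y # ys \<Rightarrow> (if fst x = fst y \<and> snd x \<noteq> snd y then ys else x # y # ys))"

definition free_group :: "'a set \<Rightarrow> ('a \<times> bool) list monoid" where
  "free_group S = \<lparr>carrier = {w. fst ` set w \<subseteq> S \<and> fg_reduce w = w},
                   monoid.mult = (\<lambda>v w. fg_reduce (v @ w)), one = []\<rparr>"

definition fg_insert :: "'a \<Rightarrow> ('a \<times> bool) list" where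
  "fg_insert x = [(x, True)]"

definition F_top :: "'a topology \<Rightarrow> ('a \<times> bool) list topology" where
  "F_top X = markov_topology (free_group (topspace X)) fg_insert X"

definition fa_insert :: "'a \<Rightarrow> ('a \<Rightarrow>\<^sub>0 int)" where
  "fa_insert x = Poly_Mapping.single x 1"

definition A_top :: "'a topology \<Rightarrow> ('a \<Rightarrow>\<^sub>0 int) topology" where
  "A_top X = markov_topology (free_Abelian_group (topspace X)) fa_insert X"

definition tychonoff_space :: "'a topology \<Rightarrow> bool" where
  "tychonoff_space X \<longleftrightarrow> completely_regular_space X \<and> t1_space X"

definition countable_fan_tightness :: "'a topology \<Rightarrow> bool" where
  "countable_fan_tightness T \<longleftrightarrow>
     (\<forall>x A. x \<in> topspace T \<and> (\<forall>n::nat. A n \<subseteq> topspace T \<and> x \<in> T closure_of A n) \<longrightarrow>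
        (\<exists>B. (\<forall>n. finite (B n) \<and> B n \<subseteq> A n) \<and> x \<in> T closure_of (\<Union>n. B n)))"

end

theory Submission
  imports Defs
begin


lemma fg_reduce_length: "length (fg_reduce w) \<le> length w"
  by (induction w) (auto split: list.splits)

lemma fg_reduce_set: "set (fg_reduce w) \<subseteq> set w"
  by (induction w) (auto split: list.splits if_splits)

lemma fg_reduce_idem: "fg_reduce (fg_reduce w) = fg_reduce w"
proof (induction w)
  case Nil then show ?case by simp
next
  case (Cons x xs)
  show ?case
  proof (cases "fg_reduce xs")
    case Nil then show ?thesis by simp
  next
    case (Cons y ys)
    have yys: "fg_reduce (y # ys) = y # ys" using Cons.IH Cons by simp
    show ?thesis
    proof (cases "fst x = fst y \<and> snd x \<noteq> snd y")
      case True
      have "fg_reduce ys = ys"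
      proof (cases "fg_reduce ys")
        case Nil then show ?thesis using yys by simp
      next
        case (Cons z zs)
        then show ?thesis using yys fg_reduce_length[of ys]
          by (auto split: if_splits)
      qed
      then show ?thesis using True Cons by simp
    next
      case False
      then show ?thesis using Cons yys by auto
    qed
  qed
qed


lemma fg_reduce_tail2: "fg_reduce (x # w) = x # w \<Longrightarrow> fg_reduce w = w"
proof (cases "fg_reduce w")
  case Nil
  assume "fg_reduce (x # w) = x # w" then show ?thesis using Nil by simp
next
  case (Cons y ys)
  assume a: "fg_reduce (x # w) = x # w"
  show ?thesis
  proof (cases "fst x = fst y \<and> snd x \<noteq> snd y")
    case True
    then have "ys = x # w" using a Cons by simp
    then show ?thesis using fg_reduce_length[of w] Cons by simp
  next
    case False then show ?thesis using a Cons by auto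
  qed
qed

lemma fg_reduce_nocancel:
  assumes "fg_reduce (x # u # us) = x # u # us"
  shows "\<not> (fst x = fst u \<and> snd x \<noteq> snd u)"
proof
  assume c: "fst x = fst u \<and> snd x \<noteq> snd u"
  have "fg_reduce (u # us) = u # us" using fg_reduce_tail2[OF assms] .
  then have "fg_reduce (x # u # us) = us" using c by simp
  then show False using assms by simp
qed

lemma fg_reduce_Cons_cong: "fg_reduce (x # w) = fg_reduce (x # fg_reduce w)"
  by (simp add: fg_reduce_idem)

lemma fg_reduce_append_right: "fg_reduce (v @ w) = fg_reduce (v @ fg_reduce w)"
  by (induction v) (simp_all add: fg_reduce_idem)

lemma fg_reduce_cancel_pair:
  assumes c: "fst x = fst y \<and> snd x \<noteq> snd y"
  shows "fg_reduce (x # y # z) = fg_reduce z"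
proof (cases "fg_reduce z")
  case Nil then show ?thesis using c by simp
next
  case (Cons u us)
  have s: "fg_reduce (u # us) = u # us" using Cons fg_reduce_idem[of z] by simp
  show ?thesis
  proof (cases "fst y = fst u \<and> snd y \<noteq> snd u")
    case True
    then have "u = x" using c by (cases u; cases x; cases y) auto
    have us: "fg_reduce us = us" using fg_reduce_tail2[OF s] .
    have "fg_reduce (x # us) = x # us"
    proof (cases us)
      case Nil then show ?thesis by simp
    next
      case (Cons v vs)
      have "\<not> (fst x = fst v \<and> snd x \<noteq> snd v)"
        using fg_reduce_nocancel[of u v vs] s \<open>u = x\<close> Cons by simp
      then show ?thesis using us Cons by simp
    qed
    then show ?thesis using True Cons \<open>u = x\<close> us by simp
  next
    case False
    then show ?thesis using Cons c by auto
  qed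
qed

lemma fg_reduce_append_left: "fg_reduce (fg_reduce v @ w) = fg_reduce (v @ w)"
proof (induction v)
  case Nil then show ?case by (simp add: fg_reduce_idem)
next
  case (Cons x v)
  have "fg_reduce (x # (v @ w)) = fg_reduce (x # fg_reduce (v @ w))"
    by (rule fg_reduce_Cons_cong)
  also have "\<dots> = fg_reduce (x # fg_reduce (fg_reduce v @ w))" using Cons by simp
  also have "\<dots> = fg_reduce (x # (fg_reduce v @ w))" by (simp add: fg_reduce_idem)
  finally have eq: "fg_reduce ((x # v) @ w) = fg_reduce (x # (fg_reduce v @ w))" by simp
  show ?case
  proof (cases "fg_reduce v")
    case Nil then show ?thesis using eq by simp
  next
    case (Cons y ys)
    show ?thesis
    proof (cases "fst x = fst y \<and> snd x \<noteq> snd y")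
      case True
      have r: "fg_reduce (x # v) = ys" using Cons True by simp
      have "fg_reduce ((x # v) @ w) = fg_reduce (x # y # (ys @ w))" using eq Cons by simp
      also have "\<dots> = fg_reduce (ys @ w)" by (rule fg_reduce_cancel_pair[OF True])
      finally show ?thesis using r by simp
    next
      case False then show ?thesis using eq Cons by auto
    qed
  qed
qed

definition fg_flip :: "('a \<times> bool) list \<Rightarrow> ('a \<times> bool) list" where
  "fg_flip w = map (\<lambda>(a,b). (a, \<not> b)) (rev w)"

lemma fg_flip_flip [simp]: "fg_flip (fg_flip w) = w"
  by (induction w) (auto simp: fg_flip_def)

lemma fg_cancel: "fg_reduce (w @ fg_flip w) = []"
proof (induction w)
  case Nil then show ?case by (simp add: fg_flip_def)
next
  case (Cons x w)
  have "fg_reduce (w @ fg_flip w @ [(fst x, \<not> snd x)]) = fg_reduce (fg_reduce (w @ fg_flip w) @ [(fst x, \<not> snd x)])"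
    using fg_reduce_append_left[of "w @ fg_flip w" "[(fst x, \<not> snd x)]"] by simp
  also have "\<dots> = [(fst x, \<not> snd x)]" using Cons by simp
  finally have "fg_reduce (w @ fg_flip w @ [(fst x, \<not> snd x)]) = [(fst x, \<not> snd x)]" .
  then show ?case by (simp add: fg_flip_def case_prod_beta)
qed

lemma fg_flip_set: "fst ` set (fg_flip w) = fst ` set w"
  by (force simp: fg_flip_def)

lemma group_free_group: "group (free_group S)"
proof (rule groupI)
  show "x \<otimes>\<^bsub>free_group S\<^esub> y \<in> carrier (free_group S)"
    if "x \<in> carrier (free_group S)" "y \<in> carrier (free_group S)" for x y
  proof -
    have "fst ` set (fg_reduce (x @ y)) \<subseteq> fst ` (set x \<union> set y)"
      using fg_reduce_set[of "x @ y"] by auto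
    moreover have "fst ` set x \<subseteq> S" "fst ` set y \<subseteq> S" using that by (auto simp: free_group_def)
    ultimately have "fst ` set (fg_reduce (x @ y)) \<subseteq> S" unfolding image_Un by blast
    then show ?thesis by (simp add: free_group_def fg_reduce_idem)
  qed
  show "\<one>\<^bsub>free_group S\<^esub> \<in> carrier (free_group S)" by (simp add: free_group_def)
  show "x \<otimes>\<^bsub>free_group S\<^esub> y \<otimes>\<^bsub>free_group S\<^esub> z = x \<otimes>\<^bsub>free_group S\<^esub> (y \<otimes>\<^bsub>free_group S\<^esub> z)" for x y z
    by (simp add: free_group_def fg_reduce_append_left)
       (metis append_assoc fg_reduce_append_right)
  show "\<one>\<^bsub>free_group S\<^esub> \<otimes>\<^bsub>free_group S\<^esub> x = x" if "x \<in> carrier (free_group S)" for x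
    using that by (simp add: free_group_def)
  show "\<exists>y\<in>carrier (free_group S). y \<otimes>\<^bsub>free_group S\<^esub> x = \<one>\<^bsub>free_group S\<^esub>"
    if "x \<in> carrier (free_group S)" for x
  proof (intro bexI)
    show "fg_reduce (fg_flip x) \<otimes>\<^bsub>free_group S\<^esub> x = \<one>\<^bsub>free_group S\<^esub>"
      using fg_cancel[of "fg_flip x"] by (simp add: free_group_def fg_reduce_append_left)
    show "fg_reduce (fg_flip x) \<in> carrier (free_group S)"
      using that fg_reduce_set[of "fg_flip x"] fg_flip_set[of x]
      by (auto simp: free_group_def fg_reduce_idem)
  qed
qed

definition fg_phi :: "('a \<Rightarrow> real) \<Rightarrow> ('a \<times> bool) list \<Rightarrow> real" where
  "fg_phi f w = sum_list (map (\<lambda>(a,b). if b then f a else - f a) w)"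

lemma fg_phi_reduce: "fg_phi f (fg_reduce w) = fg_phi f w"
proof (induction w)
  case Nil then show ?case by (simp add: fg_phi_def)
next
  case (Cons x w)
  then show ?case
    by (cases "fg_reduce w") (auto simp: fg_phi_def case_prod_beta split: if_splits)
qed

lemma fg_phi_mult: "fg_phi f (x \<otimes>\<^bsub>free_group S\<^esub> y) = fg_phi f x + fg_phi f y"
  by (simp add: free_group_def fg_phi_reduce) (simp add: fg_phi_def)



lemma series_bound:
  fixes g :: "nat \<Rightarrow> real"
  assumes "\<And>k. 0 \<le> g k \<and> g k \<le> 1"
  shows "summable (\<lambda>k. g k * (1/2)^Suc k)"
    and "\<bar>(suminf (\<lambda>k. g k * (1/2)^Suc k)) - (\<Sum>k<N. g k * (1/2)^Suc k)\<bar> \<le> (1/2)^N"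
proof -
  have geo: "summable (\<lambda>k. (1/2::real)^Suc k)"
    using summable_geometric[of "1/2::real"] by (simp add: summable_mult)
  show sm: "summable (\<lambda>k. g k * (1/2)^Suc k)"
    by (rule summable_comparison_test[OF _ geo]) (use assms in \<open>auto intro!: exI[of _ 0] mult_le_one\<close>)
  have eq: "(suminf (\<lambda>k. g k * (1/2)^Suc k)) - (\<Sum>k<N. g k * (1/2)^Suc k) = (suminf (\<lambda>k. g (k+N) * (1/2)^Suc (k+N)))"
    using suminf_split_initial_segment[OF sm, of N] by simp
  have sm2: "summable (\<lambda>k. g (k+N) * (1/2)^Suc (k+N))"
    using sm summable_iff_shift[of "\<lambda>k. g k * (1/2::real)^Suc k" N] by auto
  have geo2: "summable (\<lambda>k. (1/2::real)^Suc (k+N))"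
    using geo by (simp add: summable_iff_shift)
  have "(suminf (\<lambda>k. g (k+N) * (1/2)^Suc (k+N))) \<le> (suminf (\<lambda>k. (1/2::real)^Suc (k+N)))"
    by (rule suminf_le[OF _ sm2 geo2]) (use assms in \<open>auto intro: mult_le_one\<close>)
  also have "(suminf (\<lambda>k. (1/2::real)^Suc (k+N))) = (1/2)^N"
  proof -
    have "(suminf (\<lambda>k. (1/2::real)^Suc (k+N))) = (suminf (\<lambda>k. (1/2)^Suc N * (1/2)^k))"
      by (simp add: power_add mult_ac)
    also have "\<dots> = (1/2)^Suc N * (suminf (\<lambda>k. (1/2::real)^k))"
      by (rule suminf_mult) (rule summable_geometric, simp)
    also have "\<dots> = (1/2)^N" using suminf_geometric[of "1/2::real"] by simp
    finally show ?thesis .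
  qed
  finally have "(suminf (\<lambda>k. g (k+N) * (1/2)^Suc (k+N))) \<le> (1/2)^N" .
  moreover have "0 \<le> (suminf (\<lambda>k. g (k+N) * (1/2)^Suc (k+N)))"
    by (rule suminf_nonneg[OF sm2]) (use assms in auto)
  ultimately show "\<bar>(suminf (\<lambda>k. g k * (1/2)^Suc k)) - (\<Sum>k<N. g k * (1/2)^Suc k)\<bar> \<le> (1/2)^N"
    using eq by simp
qed

lemma series_continuous:
  assumes cont: "\<And>k. continuous_map X euclideanreal (g k)"
    and bnd: "\<And>k y. y \<in> topspace X \<Longrightarrow> 0 \<le> g k y \<and> g k y \<le> 1"
  shows "continuous_map X euclideanreal (\<lambda>y. suminf (\<lambda>k. g k y * (1/2)^Suc k))"
proof -
  have "continuous_map X Met_TC.mtopology (\<lambda>y. suminf (\<lambda>k. g k y * (1/2)^Suc k))"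
  proof (rule Met_TC.continuous_map_uniform_limit[where F=sequentially and f="\<lambda>N y. \<Sum>k<N. g k y * (1/2)^Suc k"])
    show "\<forall>\<^sub>F N in sequentially. continuous_map X Met_TC.mtopology (\<lambda>y. \<Sum>k<N. g k y * (1/2)^Suc k)"
      unfolding mtopology_is_euclidean using cont by (intro always_eventually allI continuous_map_sum finite_lessThan continuous_map_real_mult continuous_map_canonical_const) simp_all
    show "\<forall>\<^sub>F N in sequentially. \<forall>y\<in>topspace X. (suminf (\<lambda>k. g k y * (1/2)^Suc k)) \<in> UNIV \<and>
            dist (\<Sum>k<N. g k y * (1/2)^Suc k) (suminf (\<lambda>k. g k y * (1/2)^Suc k)) < e" if "0 < e" for e :: real
    proof -
      obtain N0 where N0: "(1/2::real)^N0 < e" using real_arch_pow_inv[of e "1/2::real"] \<open>0 < e\<close> by auto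
      show ?thesis
      proof (rule eventually_sequentiallyI[of N0], intro ballI conjI)
        fix N y assume "N0 \<le> N" "y \<in> topspace X"
        have "\<bar>(suminf (\<lambda>k. g k y * (1/2)^Suc k)) - (\<Sum>k<N. g k y * (1/2)^Suc k)\<bar> \<le> (1/2)^N"
          by (rule series_bound(2)) (use bnd \<open>y \<in> topspace X\<close> in auto)
        also have "(1/2::real)^N \<le> (1/2)^N0" using \<open>N0 \<le> N\<close> by (simp add: power_decreasing)
        finally show "dist (\<Sum>k<N. g k y * (1/2)^Suc k) (suminf (\<lambda>k. g k y * (1/2)^Suc k)) < e"
          using N0 by (simp add: dist_real_def abs_minus_commute)
      qed simp
    qed
  qed simp
  then show ?thesis by simp
qed



lemma markov_open:
  assumes "group_topology G T" "continuous_map X T \<iota>" "openin T U"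
  shows "openin (markov_topology G \<iota> X) U"
  unfolding markov_topology_def
  by (rule topology_generated_by_Basis) (use assms in blast)

lemma markov_topspace:
  assumes "group_topology G T" "continuous_map X T \<iota>"
  shows "topspace (markov_topology G \<iota> X) = carrier G"
  unfolding markov_topology_def topology_generated_by_topspace
proof
  show "\<Union> (\<Union> {{U. openin T U} |T. group_topology G T \<and> continuous_map X T \<iota>}) \<subseteq> carrier G"
    by (auto simp: group_topology_def dest: openin_subset)
  show "carrier G \<subseteq> \<Union> (\<Union> {{U. openin T U} |T. group_topology G T \<and> continuous_map X T \<iota>})"
    using assms by (auto simp: group_topology_def intro!: exI[of _ "topspace T"])
qed

lemma markov_cont:
  assumes "group_topology G T0" "continuous_map X T0 \<iota>"
    and h: "\<And>T. group_topology G T \<Longrightarrow> continuous_map X T \<iota> \<Longrightarrow> continuous_map Y T h"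
  shows "continuous_map Y (markov_topology G \<iota> X) h"
  unfolding markov_topology_def
proof (rule continuous_on_generated_topo)
  fix U assume "U \<in> \<Union> {{U. openin T U} |T. group_topology G T \<and> continuous_map X T \<iota>}"
  then obtain T where "group_topology G T" "continuous_map X T \<iota>" "openin T U" by blast
  then show "openin Y (h -` U \<inter> topspace Y)"
    using h by (simp add: continuous_map_alt)
next
  have "h ` topspace Y \<subseteq> topspace T0" using h[OF assms(1,2)] by (auto simp: continuous_map_def)
  then show "h ` topspace Y \<subseteq> \<Union> (\<Union> {{U. openin T U} |T. group_topology G T \<and> continuous_map X T \<iota>})"
    using assms(1,2) by blast
qed

lemma gt_mult:
  assumes "group_topology G T" "continuous_map Y T a" "continuous_map Y T b"
  shows "continuous_map Y T (\<lambda>y. a y \<otimes>\<^bsub>G\<^esub> b y)"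
proof -
  have "continuous_map Y T ((\<lambda>(x, y). x \<otimes>\<^bsub>G\<^esub> y) \<circ> (\<lambda>y. (a y, b y)))"
    using assms by (intro continuous_map_compose[where X'="prod_topology T T"] continuous_map_pairedI)
       (auto simp: group_topology_def)
  then show ?thesis by (simp add: o_def)
qed

lemma gt_inv:
  assumes "group_topology G T" "continuous_map Y T a"
  shows "continuous_map Y T (\<lambda>y. inv\<^bsub>G\<^esub> a y)"
proof -
  have "continuous_map Y T ((\<lambda>x. inv\<^bsub>G\<^esub> x) \<circ> a)"
    using assms by (intro continuous_map_compose[where X'="T"]) (auto simp: group_topology_def)
  then show ?thesis by (simp add: o_def)
qed

lemma gt_pow:
  assumes "group G" "group_topology G T" "continuous_map Y T a"
  shows "continuous_map Y T (\<lambda>y. a y [^]\<^bsub>G\<^esub> (n::nat))"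
proof (induction n)
  case 0
  have "\<one>\<^bsub>G\<^esub> \<in> topspace T" using assms(1,2) by (simp add: group_topology_def group.is_monoid monoid.one_closed)
  then show ?case using assms by simp
next
  case (Suc n)
  then show ?case using gt_mult[OF assms(2) Suc assms(3)] by simp
qed

lemma hom_props:
  assumes G: "group G" and hom: "\<forall>x\<in>carrier G. \<forall>y\<in>carrier G. \<phi> (x \<otimes>\<^bsub>G\<^esub> y) = \<phi> x + (\<phi> y :: real)"
  shows "\<phi> \<one>\<^bsub>G\<^esub> = 0" and "x \<in> carrier G \<Longrightarrow> \<phi> (inv\<^bsub>G\<^esub> x) = - \<phi> x"
    and "x \<in> carrier G \<Longrightarrow> \<phi> (x [^]\<^bsub>G\<^esub> (n::nat)) = real n * \<phi> x"
proof -
  interpret group G by (rule G)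
  show one: "\<phi> \<one>\<^bsub>G\<^esub> = 0" using hom one_closed by (metis add_cancel_right_right l_one)
  show "x \<in> carrier G \<Longrightarrow> \<phi> (inv\<^bsub>G\<^esub> x) = - \<phi> x"
    using hom one by (metis add_eq_0_iff inv_closed r_inv)
  show "x \<in> carrier G \<Longrightarrow> \<phi> (x [^]\<^bsub>G\<^esub> n) = real n * \<phi> x"
    by (induction n) (simp_all add: one hom distrib_right)
qed

lemma gt_pullback:
  assumes G: "group G" and hom: "\<forall>x\<in>carrier G. \<forall>y\<in>carrier G. \<phi> (x \<otimes>\<^bsub>G\<^esub> y) = \<phi> x + (\<phi> y :: real)"
    and \<iota>: "\<iota> ` topspace X \<subseteq> carrier G" and f: "continuous_map X euclideanreal (\<phi> \<circ> \<iota>)"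
  shows "group_topology G (pullback_topology (carrier G) \<phi> euclideanreal)"
    and "continuous_map X (pullback_topology (carrier G) \<phi> euclideanreal) \<iota>"
proof -
  interpret group G by (rule G)
  define T where "T = pullback_topology (carrier G) \<phi> euclideanreal"
  have ts: "topspace T = carrier G" by (simp add: T_def topspace_pullback_topology)
  have phic: "continuous_map T euclideanreal \<phi>"
    using continuous_map_pullback[OF continuous_map_id, of "carrier G" \<phi>] by (simp add: T_def)
  have "continuous_map (prod_topology T T) euclideanreal (\<phi> \<circ> (\<lambda>(x, y). x \<otimes>\<^bsub>G\<^esub> y))"
  proof (rule continuous_map_eq[where f="\<lambda>z. \<phi> (fst z) + \<phi> (snd z)"])
    show "continuous_map (prod_topology T T) euclideanreal (\<lambda>z. \<phi> (fst z) + \<phi> (snd z))"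
      by (intro continuous_map_add continuous_map_compose[OF continuous_map_fst phic, unfolded o_def]
          continuous_map_compose[OF continuous_map_snd phic, unfolded o_def])
    show "\<phi> (fst z) + \<phi> (snd z) = (\<phi> \<circ> (\<lambda>(x, y). x \<otimes>\<^bsub>G\<^esub> y)) z" if "z \<in> topspace (prod_topology T T)" for z
      using that hom ts by (auto simp: case_prod_beta)
  qed
  then have m: "continuous_map (prod_topology T T) T (\<lambda>(x, y). x \<otimes>\<^bsub>G\<^esub> y)"
    unfolding T_def by (rule continuous_map_pullback') (auto simp: ts[unfolded T_def])
  have "continuous_map T euclideanreal (\<phi> \<circ> (\<lambda>x. inv\<^bsub>G\<^esub> x))"
  proof (rule continuous_map_eq[where f="\<lambda>z. - \<phi> z"])
    show "continuous_map T euclideanreal (\<lambda>z. - \<phi> z)" using phic by (intro continuous_intros)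
    show "- \<phi> z = (\<phi> \<circ> (\<lambda>x. inv\<^bsub>G\<^esub> x)) z" if "z \<in> topspace T" for z
      using that ts hom_props(2)[OF G hom] by auto
  qed
  then have i: "continuous_map T T (\<lambda>x. inv\<^bsub>G\<^esub> x)"
    unfolding T_def by (rule continuous_map_pullback') (auto simp: ts[unfolded T_def])
  show "group_topology G (pullback_topology (carrier G) \<phi> euclideanreal)"
    using ts m i by (simp add: group_topology_def T_def)
  show "continuous_map X (pullback_topology (carrier G) \<phi> euclideanreal) \<iota>"
    by (rule continuous_map_pullback'[OF f]) (use \<iota> in auto)
qed



lemma easy_dir:
  assumes G: "group G" and \<iota>: "\<iota> ` topspace X \<subseteq> carrier G"
    and D: "X = discrete_topology (topspace X)"
  shows "countable_fan_tightness (markov_topology G \<iota> X)"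
proof -
  interpret group G by (rule G)
  define T where "T = discrete_topology (carrier G)"
  have gt: "group_topology G T"
    unfolding group_topology_def T_def prod_topology_discrete_topology[symmetric]
    by (auto simp: Pi_iff)
  have ci: "continuous_map X T \<iota>"
    using \<iota> by (subst D) (auto simp: T_def Pi_iff)
  have ts: "topspace (markov_topology G \<iota> X) = carrier G" by (rule markov_topspace[OF gt ci])
  show ?thesis unfolding countable_fan_tightness_def
  proof (intro allI impI)
    fix x A assume a: "x \<in> topspace (markov_topology G \<iota> X) \<and>
        (\<forall>n::nat. A n \<subseteq> topspace (markov_topology G \<iota> X) \<and> x \<in> markov_topology G \<iota> X closure_of A n)"
    have op: "openin (markov_topology G \<iota> X) {x}"
      using a ts by (intro markov_open[OF gt ci]) (auto simp: T_def)
    have xA: "x \<in> A n" for n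
      using a op unfolding in_closure_of by blast
    show "\<exists>B. (\<forall>n. finite (B n) \<and> B n \<subseteq> A n) \<and> x \<in> markov_topology G \<iota> X closure_of (\<Union>n. B n)"
    proof (rule exI[of _ "\<lambda>n. {x}"], intro conjI allI)
      show "x \<in> markov_topology G \<iota> X closure_of (\<Union>n. {x})"
        using a closure_of_subset[of "{x}" "markov_topology G \<iota> X"] by auto
    qed (use xA in auto)
  qed
qed

lemma hard_dir:
  fixes X :: "'a topology"
  assumes G: "group G" and \<iota>: "\<iota> ` topspace X \<subseteq> carrier G"
    and tych: "tychonoff_space X"
    and hom: "\<And>f. continuous_map X euclideanreal f \<Longrightarrow> \<exists>\<phi>.
        (\<forall>x\<in>carrier G. \<forall>y\<in>carrier G. \<phi> (x \<otimes>\<^bsub>G\<^esub> y) = \<phi> x + (\<phi> y :: real)) \<and> (\<forall>y\<in>topspace X. \<phi> (\<iota> y) = f y)"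
    and nd: "X \<noteq> discrete_topology (topspace X)"
  shows "\<not> countable_fan_tightness (markov_topology G \<iota> X)"
proof
  assume cft: "countable_fan_tightness (markov_topology G \<iota> X)"
  interpret group G by (rule G)
  define M where "M = markov_topology G \<iota> X"
  obtain p where p: "p \<in> topspace X" "\<not> openin X {p}"
    using nd discrete_topology_unique[of "topspace X" X] by metis
  have pcl: "p \<in> X closure_of (topspace X - {p})"
    unfolding in_closure_of
  proof (intro conjI allI impI)
    fix U assume "p \<in> U \<and> openin X U"
    then have "U \<noteq> {p}" "U \<subseteq> topspace X" using p openin_subset by auto
    with \<open>p \<in> U \<and> openin X U\<close> show "\<exists>y. y \<in> topspace X - {p} \<and> y \<in> U" by blast
  qed (use p in auto)
  have wit: "\<exists>\<phi>. group_topology G (pullback_topology (carrier G) \<phi> euclideanreal) \<and>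
              continuous_map X (pullback_topology (carrier G) \<phi> euclideanreal) \<iota> \<and>
              (\<forall>x\<in>carrier G. \<forall>y\<in>carrier G. \<phi> (x \<otimes>\<^bsub>G\<^esub> y) = \<phi> x + \<phi> y) \<and> (\<forall>y\<in>topspace X. \<phi> (\<iota> y) = f y)"
    if f: "continuous_map X euclideanreal f" for f
  proof -
    obtain \<phi> where h1: "\<forall>x\<in>carrier G. \<forall>y\<in>carrier G. \<phi> (x \<otimes>\<^bsub>G\<^esub> y) = \<phi> x + (\<phi> y :: real)"
      and h2: "\<forall>y\<in>topspace X. \<phi> (\<iota> y) = f y" using hom[OF f] by blast
    have "continuous_map X euclideanreal (\<phi> \<circ> \<iota>)"
      using f by (rule continuous_map_eq) (use h2 in auto)
    note gp = gt_pullback[OF G h1 \<iota> this]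
    show ?thesis by (rule exI[of _ \<phi>]) (intro conjI gp h1 h2)
  qed
  obtain T0 where T0: "group_topology G T0" "continuous_map X T0 \<iota>"
    using wit[of "\<lambda>_. 0"] by auto
  have tsM: "topspace M = carrier G" unfolding M_def by (rule markov_topspace[OF T0])
  define h where "h n y = (\<iota> y \<otimes>\<^bsub>G\<^esub> inv\<^bsub>G\<^esub> (\<iota> p)) [^]\<^bsub>G\<^esub> ((2::nat) ^ Suc n)" for n y
  have hcont: "continuous_map X M (h n)" for n
    unfolding M_def
  proof (rule markov_cont[OF T0])
    fix T assume T: "group_topology G T" "continuous_map X T \<iota>"
    have "continuous_map X T (\<lambda>y. \<iota> p)" using T p by (auto simp: continuous_map_def)
    then show "continuous_map X T (h n)"
      unfolding h_def using T by (intro gt_pow[OF G] gt_mult gt_inv) auto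
  qed
  have ip: "\<iota> p \<in> carrier G" using \<iota> p by auto
  have hp: "h n p = \<one>\<^bsub>G\<^esub>" for n using ip by (simp add: h_def)
  define A where "A n = h n ` (topspace X - {p})" for n
  have Asub: "A n \<subseteq> topspace M" for n
    using hcont[of n] by (auto simp: A_def continuous_map_def)
  have Acl: "\<one>\<^bsub>G\<^esub> \<in> M closure_of A n" for n
    using continuous_map_image_closure_subset[OF hcont[of n], of "topspace X - {p}"] pcl hp
    unfolding A_def by force
  have pre: "\<one>\<^bsub>G\<^esub> \<in> topspace M \<and> (\<forall>n. A n \<subseteq> topspace M \<and> \<one>\<^bsub>G\<^esub> \<in> M closure_of A n)"
    using Asub Acl tsM by simp
  have "\<exists>B. (\<forall>n. finite (B n) \<and> B n \<subseteq> A n) \<and> \<one>\<^bsub>G\<^esub> \<in> M closure_of (\<Union>n. B n)"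
    unfolding M_def
    by (rule mp[OF cft[unfolded countable_fan_tightness_def, THEN spec[of _ "\<one>\<^bsub>G\<^esub>"], THEN spec[of _ A]] pre[unfolded M_def]])
  then obtain B where B: "\<And>n. finite (B n) \<and> B n \<subseteq> A n" and Bcl: "\<one>\<^bsub>G\<^esub> \<in> M closure_of (\<Union>n. B n)"
    by blast
  have "\<forall>n. \<exists>F. F \<subseteq> topspace X - {p} \<and> finite F \<and> B n = h n ` F"
  proof
    fix n
    have "finite (B n)" "B n \<subseteq> h n ` (topspace X - {p})" using B[of n] by (auto simp: A_def)
    from finite_subset_image[OF this] show "\<exists>F. F \<subseteq> topspace X - {p} \<and> finite F \<and> B n = h n ` F"
      by blast
  qed
  then obtain F where F: "\<And>n. F n \<subseteq> topspace X - {p}" "\<And>n. finite (F n)" "\<And>n. B n = h n ` F n"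
    by metis
  have "\<forall>n. \<exists>g::'a \<Rightarrow> real. continuous_map X (top_of_set {0..1}) g \<and> g p = 0 \<and> g ` F n \<subseteq> {1}"
  proof
    fix n
    have "closedin X (F n)"
    proof -
      have t1: "t1_space X" using tych by (simp add: tychonoff_space_def)
      show ?thesis
        by (rule t1_space_closedin_finite[THEN iffD1, OF t1, rule_format]) (use F(1)[of n] F(2)[of n] in auto)
    qed
    then show "\<exists>g::'a \<Rightarrow> real. continuous_map X (top_of_set {0..1}) g \<and> g p = 0 \<and> g ` F n \<subseteq> {1}"
    proof -
      have cr: "completely_regular_space X" using tych by (simp add: tychonoff_space_def)
      have pin: "p \<in> topspace X - F n" using p F(1)[of n] by auto
      show ?thesis
        by (rule mp[OF cr[unfolded completely_regular_space_def, THEN spec[of _ "F n"], THEN spec[of _ p]]])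
           (use \<open>closedin X (F n)\<close> pin in blast)
    qed
  qed
  then have "\<exists>g::nat \<Rightarrow> 'a \<Rightarrow> real. \<forall>n. continuous_map X (top_of_set {0..1}) (g n) \<and> g n p = 0 \<and> g n ` F n \<subseteq> {1}"
    by (rule choice)
  then obtain g :: "nat \<Rightarrow> 'a \<Rightarrow> real" where gall: "\<forall>n. continuous_map X (top_of_set {0..1}) (g n) \<and> g n p = 0 \<and> g n ` F n \<subseteq> {1}"
    by blast
  have g: "\<And>n. continuous_map X (top_of_set {0..1}) (g n)" "\<And>n. g n p = 0"
    "\<And>n. g n ` F n \<subseteq> {1}" using gall by auto
  have gc: "continuous_map X euclideanreal (g n)" for n
    using g(1)[of n] continuous_map_into_fulltopology by blast
  have gb: "0 \<le> g n y \<and> g n y \<le> 1" if "y \<in> topspace X" for n y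
    using g(1)[of n] that by (auto simp: continuous_map_def)
  define f where "f y = suminf (\<lambda>k. g k y * (1/2)^Suc k)" for y
  have fc: "continuous_map X euclideanreal f"
    unfolding f_def by (rule series_continuous[OF gc gb])
  have fp: "f p = 0" using g(2) by (simp add: f_def)
  have fF: "(1/2)^Suc n \<le> f y" if "y \<in> F n" for n y
  proof -
    have y: "y \<in> topspace X" using F(1) that by auto
    have sm: "summable (\<lambda>k. g k y * (1/2)^Suc k)"
      by (rule series_bound(1)) (use gb y in auto)
    have "(1/2)^Suc n = g n y * (1/2)^Suc n" using g(3)[of n] that by auto
    also have "\<dots> \<le> (\<Sum>k\<in>{n}. g k y * (1/2)^Suc k)" by simp
    also have "\<dots> \<le> f y" unfolding f_def
      by (rule sum_le_suminf[OF sm]) (use gb y in auto)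
    finally show ?thesis .
  qed
  obtain \<phi> where \<phi>: "group_topology G (pullback_topology (carrier G) \<phi> euclideanreal)"
    "continuous_map X (pullback_topology (carrier G) \<phi> euclideanreal) \<iota>"
    "\<forall>x\<in>carrier G. \<forall>y\<in>carrier G. \<phi> (x \<otimes>\<^bsub>G\<^esub> y) = \<phi> x + \<phi> y" "\<forall>y\<in>topspace X. \<phi> (\<iota> y) = f y"
    using wit[OF fc] by blast
  define U where "U = \<phi> -` {-1<..<1} \<inter> carrier G"
  have Uo: "openin M U"
    unfolding M_def U_def
    by (rule markov_open[OF \<phi>(1,2)]) (auto simp: openin_pullback_topology intro!: exI[of _ "{-1<..<1}"])
  have "\<one>\<^bsub>G\<^esub> \<in> U" using hom_props(1)[OF G \<phi>(3)] by (simp add: U_def)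
  then obtain z where z: "z \<in> (\<Union>n. B n)" "z \<in> U" using Bcl Uo unfolding in_closure_of by blast
  then obtain n y where ny: "y \<in> F n" "z = h n y" using F(3) by blast
  have y: "y \<in> topspace X" "\<iota> y \<in> carrier G" using F(1) ny \<iota> by auto
  have "\<phi> z = real (2 ^ Suc n) * (f y - f p)"
  proof -
    have c: "\<iota> y \<otimes>\<^bsub>G\<^esub> inv\<^bsub>G\<^esub> (\<iota> p) \<in> carrier G" using y ip by simp
    have "\<phi> z = real (2 ^ Suc n) * \<phi> (\<iota> y \<otimes>\<^bsub>G\<^esub> inv\<^bsub>G\<^esub> (\<iota> p))"
      unfolding ny(2) h_def by (rule hom_props(3)[OF G \<phi>(3) c])
    also have "\<phi> (\<iota> y \<otimes>\<^bsub>G\<^esub> inv\<^bsub>G\<^esub> (\<iota> p)) = \<phi> (\<iota> y) + \<phi> (inv\<^bsub>G\<^esub> (\<iota> p))"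
      using \<phi>(3) y ip by simp
    also have "\<phi> (inv\<^bsub>G\<^esub> (\<iota> p)) = - \<phi> (\<iota> p)" by (rule hom_props(2)[OF G \<phi>(3) ip])
    also have "\<phi> (\<iota> y) = f y" using \<phi>(4) y by simp
    also have "\<phi> (\<iota> p) = f p" using \<phi>(4) p by simp
    finally show ?thesis by simp
  qed
  also have "\<dots> \<ge> 1"
  proof -
    have "(2::real)^Suc n * (1/2)^Suc n \<le> 2^Suc n * f y"
      using fF[OF ny(1)] by (intro mult_left_mono) auto
    moreover have "(2::real)^Suc n * (1/2)^Suc n = 1" by (simp add: power_mult_distrib[symmetric])
    moreover have "real (2 ^ Suc n) * (f y - f p) = (2::real)^Suc n * f y" using fp by simp
    ultimately show ?thesis by linarith
  qed
  finally show False using z(2) by (simp add: U_def)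
qed



definition fa_phi :: "('a \<Rightarrow> real) \<Rightarrow> ('a \<Rightarrow>\<^sub>0 int) \<Rightarrow> real" where
  "fa_phi f m = (\<Sum>a\<in>Poly_Mapping.keys m. real_of_int (Poly_Mapping.lookup m a) * f a)"

lemma fa_phi_super:
  assumes "finite K" "Poly_Mapping.keys m \<subseteq> K"
  shows "fa_phi f m = (\<Sum>a\<in>K. real_of_int (Poly_Mapping.lookup m a) * f a)"
  unfolding fa_phi_def
  by (rule sum.mono_neutral_left[OF assms(1,2)]) (auto simp: in_keys_iff)

lemma fa_phi_add: "fa_phi f (x + y) = fa_phi f x + fa_phi f y"
proof -
  define K where "K = Poly_Mapping.keys x \<union> Poly_Mapping.keys y"
  have fK: "finite K" by (simp add: K_def)
  have kxy: "Poly_Mapping.keys (x + y) \<subseteq> K" using keys_add[of x y] by (auto simp: K_def)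
  show ?thesis
    using fa_phi_super[OF fK kxy, of f] fa_phi_super[OF fK, of x f] fa_phi_super[OF fK, of y f]
    by (simp add: K_def lookup_add distrib_right sum.distrib)
qed

lemma fa_phi_single: "fa_phi f (Poly_Mapping.single y 1) = f y"
  by (simp add: fa_phi_def)

lemma F_equiv:
  fixes X :: "'a topology"
  assumes "tychonoff_space X"
  shows "countable_fan_tightness (F_top X) \<longleftrightarrow> X = discrete_topology (topspace X)"
proof -
  have G: "group (free_group (topspace X))" by (rule group_free_group)
  have i: "fg_insert ` topspace X \<subseteq> carrier (free_group (topspace X))"
    by (auto simp: free_group_def fg_insert_def)
  have hom: "\<exists>\<phi>. (\<forall>x\<in>carrier (free_group (topspace X)). \<forall>y\<in>carrier (free_group (topspace X)).
        \<phi> (x \<otimes>\<^bsub>free_group (topspace X)\<^esub> y) = \<phi> x + (\<phi> y :: real)) \<and> (\<forall>y\<in>topspace X. \<phi> (fg_insert y) = f y)"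
    for f :: "'a \<Rightarrow> real"
    by (rule exI[of _ "fg_phi f"]) (simp add: fg_phi_mult, simp add: fg_phi_def fg_insert_def)
  show ?thesis
    unfolding F_top_def using easy_dir[OF G i] hard_dir[OF G i assms hom] by blast
qed

lemma A_equiv:
  fixes X :: "'a topology"
  assumes "tychonoff_space X"
  shows "countable_fan_tightness (A_top X) \<longleftrightarrow> X = discrete_topology (topspace X)"
proof -
  have G: "group (free_Abelian_group (topspace X))" by simp
  have i: "fa_insert ` topspace X \<subseteq> carrier (free_Abelian_group (topspace X))"
    by (auto simp: fa_insert_def)
  have hom: "\<exists>\<phi>. (\<forall>x\<in>carrier (free_Abelian_group (topspace X)). \<forall>y\<in>carrier (free_Abelian_group (topspace X)).
        \<phi> (x \<otimes>\<^bsub>free_Abelian_group (topspace X)\<^esub> y) = \<phi> x + (\<phi> y :: real)) \<and> (\<forall>y\<in>topspace X. \<phi> (fa_insert y) = f y)"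
    for f :: "'a \<Rightarrow> real"
    by (rule exI[of _ "fa_phi f"]) (simp add: fa_phi_add fa_phi_single fa_insert_def)
  show ?thesis
    unfolding A_top_def using easy_dir[OF G i] hard_dir[OF G i assms hom] by blast
qed

theorem theorem3p8:
  fixes X :: "'a topology"
  assumes "tychonoff_space X"
  shows "(countable_fan_tightness (F_top X) \<longleftrightarrow> X = discrete_topology (topspace X))
       \<and> (countable_fan_tightness (A_top X) \<longleftrightarrow> X = discrete_topology (topspace X))"
  using F_equiv[OF assms] A_equiv[OF assms] by blast


end
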